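(* Let $M$ be a connected surface with null coordinates $(u,v)$ and $\varphi:M\to\mathbb{H}^3_1(-1)$ a conformal timelike immersion with unit normal field $N$. Then the map $\varphi+N:M\to\mathbb{N}$ (hyperbolic Gauss map) is conformal, i.e. $\langle d(\varphi+N),d(\varphi+N)\rangle=\lambda\,\langle d\varphi,d\varphi\rangle$ for some function $\lambda:M\to\mathbb{R}$, if and only if either $H\equiv1$ on $M$ or $\varphi$ is totally umbilic ($Q\equiv R\equiv0$). Likewise, $\varphi-N$ is conformal if and only if $H\equiv-1$ or $\varphi$ is totally umbilic.
   Context: $\mathbb{E}^4_2$ is $\mathbb{R}^4$ with metric $\langle\cdot,\cdot\rangle=-(dx_0)^2-(dx_1)^2+(dx_2)^2+(dx_3)^2$; $\mathbb{H}^3_1(-1)=\{x:\langle x,x\rangle=-1\}$; $\mathbb{N}=\{x\in\mathbb{E}^4_2:\langle x,x\rangle=0\}$ the null cone. Conformal timelike immersion in null coordinates: $\langle\varphi_u,\varphi_u\rangle=\langle\varphi_v,\varphi_v\rangle=0$, $\langle\varphi_u,\varphi_v\rangle=\tfrac12e^{\omega}$. Unit normal: $\langle N,N\rangle=1$, $N\perp\varphi,\varphi_u,\varphi_v$. Mean curvature $H=2e^{-\omega}\langle\varphi_{uv},N\rangle$; Hopf pairs $Q=\langle\varphi_{uu},N\rangle$, $R=\langle\varphi_{vv},N\rangle$; totally umbilic means $Q=R=0$ everywhere. *)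

theory Defs
  imports "HOL-Analysis.Analysis"
begin

text \<open>Points of E^4_2 are vectors in real^4; components 1,2,3,4 play the role of x0,x1,x2,x3.\<close>

definition lor :: "real^4 \<Rightarrow> real^4 \<Rightarrow> real" where
  "lor x y = - x$1 * y$1 - x$2 * y$2 + x$3 * y$3 + x$4 * y$4"

definition H31 :: "(real^4) set" where "H31 = {x. lor x x = -1}"
definition nullcone :: "(real^4) set" where "nullcone = {x. lor x x = 0}"

definition fform :: "real^4 \<Rightarrow> real^4 \<Rightarrow> real \<Rightarrow> real \<Rightarrow> real" where
  "fform Xu Xv a b = lor (a *\<^sub>R Xu + b *\<^sub>R Xv) (a *\<^sub>R Xu + b *\<^sub>R Xv)"

definition conformal_rel ::
  "(real\<times>real) set \<Rightarrow> (real\<times>real \<Rightarrow> real^4) \<Rightarrow> (real\<times>real \<Rightarrow> real^4)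
     \<Rightarrow> (real\<times>real \<Rightarrow> real^4) \<Rightarrow> (real\<times>real \<Rightarrow> real^4) \<Rightarrow> bool" where
  "conformal_rel U Yu Yv Xu Xv \<longleftrightarrow>
     (\<exists>lam :: real\<times>real \<Rightarrow> real. \<forall>p\<in>U. \<forall>a b.
        fform (Yu p) (Yv p) a b = lam p * fform (Xu p) (Xv p) a b)"

end

theory Submission
  imports Defs
begin

lemma lor_sym: "lor x y = lor y x" by (simp add: lor_def algebra_simps)
lemma lor_add_left: "lor (x + y) z = lor x z + lor y z" by (simp add: lor_def algebra_simps)
lemma lor_add_right: "lor z (x + y) = lor z x + lor z y" by (simp add: lor_def algebra_simps)
lemma lor_diff_left: "lor (x - y) z = lor x z - lor y z" by (simp add: lor_def algebra_simps)
lemma lor_diff_right: "lor z (x - y) = lor z x - lor z y" by (simp add: lor_def algebra_simps)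
lemma lor_scale_left: "lor (r *\<^sub>R x) z = r * lor x z" by (simp add: lor_def algebra_simps)
lemma lor_scale_right: "lor z (r *\<^sub>R x) = r * lor z x" by (simp add: lor_def algebra_simps)
lemma lor_minus_left: "lor (- x) z = - lor x z" by (simp add: lor_def algebra_simps)
lemma lor_minus_right: "lor z (- x) = - lor z x" by (simp add: lor_def algebra_simps)
lemma lor_zero_left: "lor 0 z = 0" by (simp add: lor_def)
lemmas lor_simps = lor_add_left lor_add_right lor_diff_left lor_diff_right lor_scale_left
  lor_scale_right lor_minus_left lor_minus_right lor_zero_left

lemma bilinear_lor: "bilinear lor"
  unfolding bilinear_def by (auto intro!: linearI simp: lor_simps)

lemma bounded_bilinear_lor: "bounded_bilinear lor"
  using bilinear_lor bilinear_conv_bounded_bilinear by blast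

lemma bounded_linear_lor_left: "bounded_linear (\<lambda>x. lor x X)"
  using bounded_bilinear.bounded_linear_left[OF bounded_bilinear_lor] .

lemma frame_decomp:
  fixes a b c d z :: "real^4"
  assumes aa: "lor a a = -1" and ab: "lor a b = 0" and ac: "lor a c = 0" and ad: "lor a d = 0"
    and bb: "lor b b = 0" and cc: "lor c c = 0" and bc: "lor b c = s" and s: "s \<noteq> 0"
    and bd: "lor b d = 0" and cd: "lor c d = 0" and dd: "lor d d = 1"
  shows "z = (- lor z a) *\<^sub>R a + (lor z c / s) *\<^sub>R b + (lor z b / s) *\<^sub>R c + lor z d *\<^sub>R d"
proof -
  define f where "f = (\<lambda>x::real^4. (\<chi> i. if i = 1 then lor x a else if i = 2 then lor x b else if i = 3 then lor x c else lor x d) :: real^4)"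
  have lin: "linear f"
    unfolding f_def by (rule linearI) (auto simp: vec_eq_iff forall_4 lor_simps)
  have surj: "surj f"
  proof (rule surjI)
    fix y :: "real^4"
    show "f ((- (y$1)) *\<^sub>R a + (y$3 / s) *\<^sub>R b + (y$2 / s) *\<^sub>R c + y$4 *\<^sub>R d) = y"
      using assms by (simp add: f_def vec_eq_iff forall_4 lor_simps lor_sym[of b a] lor_sym[of c a]
          lor_sym[of d a] lor_sym[of c b] lor_sym[of d b] lor_sym[of d c])
  qed
  have inj: "inj f" using lin surj by (simp add: linear_surjective_imp_injective)
  show ?thesis
    apply (rule injD[OF inj])
    using assms by (simp add: f_def vec_eq_iff forall_4 lor_simps lor_sym[of b a] lor_sym[of c a]
          lor_sym[of d a] lor_sym[of c b] lor_sym[of d b] lor_sym[of d c])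
qed

lemma hd_u:
  fixes f :: "real \<times> real \<Rightarrow> real"
  assumes "(f has_derivative (\<lambda>h. fst h * a + snd h * b)) (at (x,y))"
  shows "((\<lambda>s. f (s,y)) has_real_derivative a) (at x)"
proof -
  have "((\<lambda>s. (s,y)) has_derivative (\<lambda>h. (h,0))) (at x)"
    by (auto intro!: derivative_eq_intros)
  from has_derivative_compose[OF this assms]
  show ?thesis unfolding has_field_derivative_def
    by (rule has_derivative_eq_rhs) (auto simp: fun_eq_iff)
qed

lemma hd_v:
  fixes f :: "real \<times> real \<Rightarrow> real"
  assumes "(f has_derivative (\<lambda>h. fst h * a + snd h * b)) (at (x,y))"
  shows "((\<lambda>t. f (x,t)) has_real_derivative b) (at y)"
proof -
  have "((\<lambda>t. (x,t)) has_derivative (\<lambda>h. (0,h))) (at y)"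
    by (auto intro!: derivative_eq_intros)
  from has_derivative_compose[OF this assms]
  show ?thesis unfolding has_field_derivative_def
    by (rule has_derivative_eq_rhs) (auto simp: fun_eq_iff)
qed

lemma dist_pair_le: "dist (a::real, b::real) (c, d) \<le> dist a c + dist b d"
  using norm_Pair_le[of "a-c" "b-d"] by (simp add: dist_norm)

lemma schwarz:
  fixes f fu fv fuu fuv fvu fvv :: "real \<times> real \<Rightarrow> real"
  assumes U: "open U" and p: "p \<in> U"
    and df: "\<And>q. q \<in> U \<Longrightarrow> (f has_derivative (\<lambda>h. fst h * fu q + snd h * fv q)) (at q)"
    and dfu: "\<And>q. q \<in> U \<Longrightarrow> (fu has_derivative (\<lambda>h. fst h * fuu q + snd h * fuv q)) (at q)"
    and dfv: "\<And>q. q \<in> U \<Longrightarrow> (fv has_derivative (\<lambda>h. fst h * fvu q + snd h * fvv q)) (at q)"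
    and c1: "continuous_on U fuv" and c2: "continuous_on U fvu"
  shows "fuv p = fvu p"
proof (rule ccontr)
  assume ne: "fuv p \<noteq> fvu p"
  define \<epsilon> where "\<epsilon> = \<bar>fuv p - fvu p\<bar> / 2"
  have \<epsilon>: "\<epsilon> > 0" using ne by (simp add: \<epsilon>_def)
  obtain r0 where r0: "r0 > 0" "ball p r0 \<subseteq> U" using U p open_contains_ball by blast
  have cu: "continuous (at p) fuv" using c1 U p continuous_on_eq_continuous_at by blast
  have cv: "continuous (at p) fvu" using c2 U p continuous_on_eq_continuous_at by blast
  obtain r1 where r1: "r1 > 0" "\<And>q. dist q p < r1 \<Longrightarrow> dist (fuv q) (fuv p) < \<epsilon>"
    using cu \<epsilon> unfolding continuous_at_eps_delta by blast
  obtain r2 where r2: "r2 > 0" "\<And>q. dist q p < r2 \<Longrightarrow> dist (fvu q) (fvu p) < \<epsilon>"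
    using cv \<epsilon> unfolding continuous_at_eps_delta by blast
  define r where "r = min r0 (min r1 r2)"
  have r: "r > 0" "r \<le> r0" "r \<le> r1" "r \<le> r2" using r0 r1 r2 by (auto simp: r_def)
  obtain x0 y0 where p0: "p = (x0, y0)" by (cases p)
  define h where "h = r / 3"
  have h: "h > 0" using r by (simp add: h_def)
  have inS: "(x0 + s, y0 + t) \<in> U" "dist (x0 + s, y0 + t) p < r"
    if "0 \<le> s" "s \<le> h" "0 \<le> t" "t \<le> h" for s t
  proof -
    have "dist (x0 + s, y0 + t) p \<le> dist (x0+s) x0 + dist (y0+t) y0"
      unfolding p0 by (rule dist_pair_le)
    also have "\<dots> \<le> 2 * h" using that by (simp add: dist_real_def)
    also have "\<dots> < r" using h by (simp add: h_def)
    finally show "dist (x0 + s, y0 + t) p < r" .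
    then show "(x0 + s, y0 + t) \<in> U" using r r0 by (auto simp: dist_commute)
  qed
  define \<Delta> where "\<Delta> = f (x0+h, y0+h) - f (x0+h, y0) - f (x0, y0+h) + f (x0, y0)"
  obtain q1 where q1: "dist q1 p < r" "\<Delta> = h * h * fuv q1"
  proof -
    define g where "g = (\<lambda>s. f (s, y0+h) - f (s, y0))"
    have "\<exists>z>x0. z < x0 + h \<and> g (x0+h) - g x0 = (x0 + h - x0) * (fu (z, y0+h) - fu (z, y0))"
    proof (rule MVT2)
      show "x0 < x0 + h" using h by simp
      fix s assume s: "x0 \<le> s" "s \<le> x0 + h"
      have a: "(x0 + (s - x0), y0 + h) \<in> U" "(x0 + (s - x0), y0 + 0) \<in> U"
        using inS[of "s - x0" h] inS[of "s - x0" 0] s h by auto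
      show "(g has_real_derivative fu (s, y0+h) - fu (s, y0)) (at s)"
        unfolding g_def using a
        by (auto intro!: derivative_intros hd_u df)
    qed
    then obtain z where z: "x0 < z" "z < x0 + h" "\<Delta> = h * (fu (z, y0+h) - fu (z, y0))"
      by (auto simp: g_def \<Delta>_def)
    have "\<exists>w>y0. w < y0 + h \<and> fu (z, y0+h) - fu (z, y0) = (y0 + h - y0) * fuv (z, w)"
    proof (rule MVT2)
      show "y0 < y0 + h" using h by simp
      fix t assume t: "y0 \<le> t" "t \<le> y0 + h"
      have a: "(x0 + (z - x0), y0 + (t - y0)) \<in> U"
        using inS[of "z - x0" "t - y0"] z t by auto
      show "((\<lambda>t. fu (z, t)) has_real_derivative fuv (z, t)) (at t)"
        using a by (auto intro!: hd_v dfu)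
    qed
    then obtain w where w: "y0 < w" "w < y0 + h" "fu (z, y0+h) - fu (z, y0) = h * fuv (z, w)"
      by auto
    have "dist (x0 + (z - x0), y0 + (w - y0)) p < r" using inS[of "z - x0" "w - y0"] z w by auto
    then show ?thesis using that[of "(z,w)"] z w by auto
  qed
  obtain q2 where q2: "dist q2 p < r" "\<Delta> = h * h * fvu q2"
  proof -
    define g where "g = (\<lambda>t. f (x0+h, t) - f (x0, t))"
    have "\<exists>z>y0. z < y0 + h \<and> g (y0+h) - g y0 = (y0 + h - y0) * (fv (x0+h, z) - fv (x0, z))"
    proof (rule MVT2)
      show "y0 < y0 + h" using h by simp
      fix t assume t: "y0 \<le> t" "t \<le> y0 + h"
      have a: "(x0 + h, y0 + (t - y0)) \<in> U" "(x0 + 0, y0 + (t - y0)) \<in> U"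
        using inS[of h "t - y0"] inS[of 0 "t - y0"] t h by auto
      show "(g has_real_derivative fv (x0+h, t) - fv (x0, t)) (at t)"
        unfolding g_def using a
        by (auto intro!: derivative_intros hd_v df)
    qed
    then obtain z where z: "y0 < z" "z < y0 + h" "\<Delta> = h * (fv (x0+h, z) - fv (x0, z))"
      by (auto simp: g_def \<Delta>_def algebra_simps)
    have "\<exists>w>x0. w < x0 + h \<and> fv (x0+h, z) - fv (x0, z) = (x0 + h - x0) * fvu (w, z)"
    proof (rule MVT2)
      show "x0 < x0 + h" using h by simp
      fix s assume s: "x0 \<le> s" "s \<le> x0 + h"
      have a: "(x0 + (s - x0), y0 + (z - y0)) \<in> U"
        using inS[of "s - x0" "z - y0"] z s by auto
      show "((\<lambda>s. fv (s, z)) has_real_derivative fvu (s, z)) (at s)"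
        using a by (auto intro!: hd_u dfv)
    qed
    then obtain w where w: "x0 < w" "w < x0 + h" "fv (x0+h, z) - fv (x0, z) = h * fvu (w, z)"
      by auto
    have "dist (x0 + (w - x0), y0 + (z - y0)) p < r" using inS[of "w - x0" "z - y0"] z w by auto
    then show ?thesis using that[of "(w,z)"] z w by auto
  qed
  have "fuv q1 = fvu q2" using q1 q2 h by simp
  moreover have "\<bar>fuv q1 - fuv p\<bar> < \<epsilon>" using r1(2)[of q1] q1 r by (simp add: dist_real_def)
  moreover have "\<bar>fvu q2 - fvu p\<bar> < \<epsilon>" using r2(2)[of q2] q2 r by (simp add: dist_real_def)
  ultimately show False unfolding \<epsilon>_def by (simp add: abs_if split: if_splits)
qed

lemma local_const2:
  fixes G M J :: "real \<times> real \<Rightarrow> real"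
  assumes V: "open V" "y0 \<in> V"
    and dG: "\<And>y. y \<in> V \<Longrightarrow> (G has_derivative (\<lambda>h. J y * fst h)) (at y)"
    and dM: "\<And>y. y \<in> V \<Longrightarrow> (M has_derivative (\<lambda>h. J y * snd h)) (at y)"
  shows "\<exists>e>0. \<forall>y\<in>ball y0 e. J y = J y0"
proof -
  obtain r where r: "r > 0" "ball y0 r \<subseteq> V" using V open_contains_ball by blast
  obtain a0 b0 where y0: "y0 = (a0, b0)" by (cases y0)
  define \<delta> where "\<delta> = r / 2"
  have \<delta>: "\<delta> > 0" using r by (simp add: \<delta>_def)
  have inV: "(s, t) \<in> V" if "\<bar>s - a0\<bar> < \<delta>" "\<bar>t - b0\<bar> < \<delta>" for s t
  proof -
    have "dist y0 (s,t) \<le> dist a0 s + dist b0 t" unfolding y0 by (rule dist_pair_le)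
    also have "\<dots> < r" using that by (simp add: dist_real_def \<delta>_def abs_minus_commute)
    finally show ?thesis using r by auto
  qed
  have dGu: "((\<lambda>s. G (s, t)) has_real_derivative J (s, t)) (at s)"
    and dGv: "((\<lambda>t. G (s, t)) has_real_derivative 0) (at t)"
    and dMu: "((\<lambda>s. M (s, t)) has_real_derivative 0) (at s)"
    and dMv: "((\<lambda>t. M (s, t)) has_real_derivative J (s, t)) (at t)"
    if "\<bar>s - a0\<bar> < \<delta>" "\<bar>t - b0\<bar> < \<delta>" for s t
  proof -
    have G': "(G has_derivative (\<lambda>h. fst h * J (s,t) + snd h * 0)) (at (s,t))"
      by (rule has_derivative_eq_rhs[OF dG[OF inV[OF that]]]) (auto simp: fun_eq_iff)
    have M': "(M has_derivative (\<lambda>h. fst h * 0 + snd h * J (s,t))) (at (s,t))"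
      by (rule has_derivative_eq_rhs[OF dM[OF inV[OF that]]]) (auto simp: fun_eq_iff)
    show "((\<lambda>s. G (s, t)) has_real_derivative J (s, t)) (at s)" using hd_u[OF G'] .
    show "((\<lambda>t. G (s, t)) has_real_derivative 0) (at t)" using hd_v[OF G'] .
    show "((\<lambda>s. M (s, t)) has_real_derivative 0) (at s)" using hd_u[OF M'] .
    show "((\<lambda>t. M (s, t)) has_real_derivative J (s, t)) (at t)" using hd_v[OF M'] .
  qed
  have Gc: "G (s, t) = G (s, t')" if "\<bar>s - a0\<bar> < \<delta>" "\<bar>t - b0\<bar> < \<delta>" "\<bar>t' - b0\<bar> < \<delta>" for s t t'
  proof -
    have d: "((\<lambda>t. G (s, t)) has_real_derivative 0) (at x)" if "x \<in> {b0 - \<delta><..<b0 + \<delta>}" for x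
    proof -
      have "\<bar>x - b0\<bar> < \<delta>" using that by auto
      then show ?thesis using dGv[OF \<open>\<bar>s - a0\<bar> < \<delta>\<close>] by simp
    qed
    have "b0 - \<delta> < b0 + \<delta>" "t \<in> {b0 - \<delta><..<b0 + \<delta>}" "t' \<in> {b0 - \<delta><..<b0 + \<delta>}"
      using that \<delta> by auto
    from DERIV_isconst3[OF this d] show ?thesis .
  qed
  have Mc: "M (s, t) = M (s', t)" if "\<bar>s - a0\<bar> < \<delta>" "\<bar>s' - a0\<bar> < \<delta>" "\<bar>t - b0\<bar> < \<delta>" for s s' t
  proof -
    have d: "((\<lambda>s. M (s, t)) has_real_derivative 0) (at x)" if "x \<in> {a0 - \<delta><..<a0 + \<delta>}" for x
    proof -
      have "\<bar>x - a0\<bar> < \<delta>" using that by auto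
      then show ?thesis using dMu[OF _ \<open>\<bar>t - b0\<bar> < \<delta>\<close>] by simp
    qed
    have "a0 - \<delta> < a0 + \<delta>" "s \<in> {a0 - \<delta><..<a0 + \<delta>}" "s' \<in> {a0 - \<delta><..<a0 + \<delta>}"
      using that \<delta> by auto
    from DERIV_isconst3[OF this d] show ?thesis .
  qed
  have J1: "J (a, b) = J (a, b0)" if ab: "\<bar>a - a0\<bar> < \<delta>" "\<bar>b - b0\<bar> < \<delta>" for a b
  proof -
    have b0: "\<bar>b0 - b0\<bar> < \<delta>" using \<delta> by simp
    have d1: "((\<lambda>s. G (s, b)) has_real_derivative J (a, b)) (at a)" using dGu[OF ab] .
    have d2: "((\<lambda>s. G (s, b0)) has_real_derivative J (a, b0)) (at a)" using dGu[OF ab(1) b0] .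
    have o: "open {a0 - \<delta> <..< a0 + \<delta>}" by simp
    have m: "a \<in> {a0 - \<delta> <..< a0 + \<delta>}" using ab by (simp add: abs_less_iff)
    have e: "G (x, b) = G (x, b0)" if "x \<in> {a0 - \<delta> <..< a0 + \<delta>}" for x
    proof -
      have "\<bar>x - a0\<bar> < \<delta>" using that by (simp add: abs_less_iff)
      then show ?thesis using Gc[OF _ ab(2) b0] by blast
    qed
    have d3: "((\<lambda>s. G (s, b0)) has_real_derivative J (a, b)) (at a)"
      using has_field_derivative_transform_within_open[OF d1 o m e] .
    show ?thesis using DERIV_unique[OF d3 d2] .
  qed
  have J2: "J (a, b0) = J (a0, b0)" if a: "\<bar>a - a0\<bar> < \<delta>" for a
  proof -
    have b0: "\<bar>b0 - b0\<bar> < \<delta>" using \<delta> by simp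
    have a0: "\<bar>a0 - a0\<bar> < \<delta>" using \<delta> by simp
    have d1: "((\<lambda>t. M (a, t)) has_real_derivative J (a, b0)) (at b0)" using dMv[OF a b0] .
    have d2: "((\<lambda>t. M (a0, t)) has_real_derivative J (a0, b0)) (at b0)" using dMv[OF a0 b0] .
    have o: "open {b0 - \<delta> <..< b0 + \<delta>}" by simp
    have m: "b0 \<in> {b0 - \<delta> <..< b0 + \<delta>}" using \<delta> by simp
    have e: "M (a, x) = M (a0, x)" if "x \<in> {b0 - \<delta> <..< b0 + \<delta>}" for x
    proof -
      have "\<bar>x - b0\<bar> < \<delta>" using that by (simp add: abs_less_iff)
      then show ?thesis using Mc[OF a a0] by blast
    qed
    have d3: "((\<lambda>t. M (a0, t)) has_real_derivative J (a, b0)) (at b0)"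
      using has_field_derivative_transform_within_open[OF d1 o m e] .
    show ?thesis using DERIV_unique[OF d3 d2] .
  qed
  show ?thesis
  proof (intro exI[of _ \<delta>] conjI ballI \<delta>)
    fix y assume y: "y \<in> ball y0 \<delta>"
    obtain a b where yab: "y = (a, b)" by (cases y)
    have "dist a0 a \<le> dist y0 y" "dist b0 b \<le> dist y0 y"
      unfolding y0 yab by (simp_all add: dist_Pair_Pair real_sqrt_sum_squares_ge1 real_sqrt_sum_squares_ge2)
    then have ab: "\<bar>a - a0\<bar> < \<delta>" "\<bar>b - b0\<bar> < \<delta>" using y by (auto simp: dist_real_def abs_minus_commute)
    show "J y = J y0" unfolding yab y0 using J1[OF ab] J2[OF ab(1)] by (rule trans)
  qed
qed

lemma fform_expand: "fform A B a b = a * a * lor A A + 2 * a * b * lor A B + b * b * lor B B"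
  unfolding fform_def by (simp add: lor_simps lor_sym[of B A] algebra_simps)

lemma conformal_iff:
  assumes "\<And>p. p \<in> U \<Longrightarrow> lor (Xu p) (Xu p) = 0" "\<And>p. p \<in> U \<Longrightarrow> lor (Xv p) (Xv p) = 0"
    "\<And>p. p \<in> U \<Longrightarrow> lor (Xu p) (Xv p) \<noteq> 0"
  shows "conformal_rel U Yu Yv Xu Xv \<longleftrightarrow> (\<forall>p\<in>U. lor (Yu p) (Yu p) = 0 \<and> lor (Yv p) (Yv p) = 0)"
proof
  assume "conformal_rel U Yu Yv Xu Xv"
  then obtain lam where l: "\<And>p a b. p \<in> U \<Longrightarrow> fform (Yu p) (Yv p) a b = lam p * fform (Xu p) (Xv p) a b"
    unfolding conformal_rel_def by blast
  show "\<forall>p\<in>U. lor (Yu p) (Yu p) = 0 \<and> lor (Yv p) (Yv p) = 0"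
    using l[of _ 1 0] l[of _ 0 1] assms by (simp add: fform_expand)
next
  assume h: "\<forall>p\<in>U. lor (Yu p) (Yu p) = 0 \<and> lor (Yv p) (Yv p) = 0"
  show "conformal_rel U Yu Yv Xu Xv"
    unfolding conformal_rel_def
    by (rule exI[of _ "\<lambda>p. lor (Yu p) (Yv p) / lor (Xu p) (Xv p)"]) (use h assms in \<open>auto simp: fform_expand\<close>)
qed

lemma lor_deriv:
  assumes "(F has_derivative (\<lambda>h. fst h *\<^sub>R Fu + snd h *\<^sub>R Fv)) (at p)"
    and "(G has_derivative (\<lambda>h. fst h *\<^sub>R Gu + snd h *\<^sub>R Gv)) (at p)"
  shows "((\<lambda>q. lor (F q) (G q)) has_derivative
     (\<lambda>h. fst h * (lor Fu (G p) + lor (F p) Gu) + snd h * (lor Fv (G p) + lor (F p) Gv))) (at p)"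
  by (rule has_derivative_eq_rhs[OF bounded_bilinear.FDERIV[OF bounded_bilinear_lor assms]])
     (auto simp: fun_eq_iff lor_simps algebra_simps)

lemma lor_deriv_const:
  assumes "(F has_derivative (\<lambda>h. fst h *\<^sub>R Fu + snd h *\<^sub>R Fv)) (at p)"
  shows "((\<lambda>q. lor (F q) X) has_derivative (\<lambda>h. fst h * lor Fu X + snd h * lor Fv X)) (at p)"
  by (rule has_derivative_eq_rhs[OF bounded_linear.has_derivative[OF bounded_linear_lor_left assms]])
     (auto simp: fun_eq_iff lor_simps algebra_simps)

lemma comp_deriv:
  fixes F :: "real \<times> real \<Rightarrow> real^4"
  assumes "(F has_derivative (\<lambda>h. fst h *\<^sub>R Fu + snd h *\<^sub>R Fv)) (at p)"
  shows "((\<lambda>q. F q $ i) has_derivative (\<lambda>h. fst h * Fu $ i + snd h * Fv $ i)) (at p)"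
  by (rule has_derivative_eq_rhs[OF bounded_linear.has_derivative[OF bounded_linear_vec_nth assms]])
     (auto simp: fun_eq_iff)

lemma lor_const:
  assumes U: "open U" "p \<in> U" and c: "\<And>q. q \<in> U \<Longrightarrow> lor (F q) (G q) = c"
    and "(F has_derivative (\<lambda>h. fst h *\<^sub>R Fu + snd h *\<^sub>R Fv)) (at p)"
    and "(G has_derivative (\<lambda>h. fst h *\<^sub>R Gu + snd h *\<^sub>R Gv)) (at p)"
  shows "lor Fu (G p) + lor (F p) Gu = 0 \<and> lor Fv (G p) + lor (F p) Gv = 0"
proof -
  note d1 = lor_deriv[OF assms(4,5)]
  have "((\<lambda>q. lor (F q) (G q)) has_derivative (\<lambda>h. 0)) (at p)"
    using has_derivative_transform_within_open[OF has_derivative_const[of c] U] c by simp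
  from has_derivative_unique[OF d1 this]
  have "\<And>h. fst h * (lor Fu (G p) + lor (F p) Gu) + snd h * (lor Fv (G p) + lor (F p) Gv) = 0"
    by metis
  from this[of "(1,0)"] this[of "(0,1)"] show ?thesis by simp
qed

lemma continuous_on_lor:
  "continuous_on S F \<Longrightarrow> continuous_on S G \<Longrightarrow> continuous_on S (\<lambda>x. lor (F x) (G x))"
  using bounded_bilinear.continuous_on[OF bounded_bilinear_lor] by blast

lemma umbilic_local_const:
  fixes \<phi> \<phi>u \<phi>v N Nu Nv :: "real\<times>real \<Rightarrow> real^4" and H :: "real\<times>real \<Rightarrow> real"
  assumes W: "open W" "p0 \<in> W"
    and d\<phi>: "\<And>p. p \<in> W \<Longrightarrow> (\<phi> has_derivative (\<lambda>h. fst h *\<^sub>R \<phi>u p + snd h *\<^sub>R \<phi>v p)) (at p)"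
    and c\<phi>u: "continuous_on W \<phi>u" and c\<phi>v: "continuous_on W \<phi>v"
    and dN: "\<And>p. p \<in> W \<Longrightarrow> (N has_derivative (\<lambda>h. fst h *\<^sub>R Nu p + snd h *\<^sub>R Nv p)) (at p)"
    and Nu: "\<And>p. p \<in> W \<Longrightarrow> Nu p = (- H p) *\<^sub>R \<phi>u p"
    and Nv: "\<And>p. p \<in> W \<Longrightarrow> Nv p = (- H p) *\<^sub>R \<phi>v p"
    and n1: "lor (\<phi>u p0) (\<phi>u p0) = 0" and n2: "lor (\<phi>v p0) (\<phi>v p0) = 0"
    and n3: "lor (\<phi>u p0) (\<phi>v p0) = s" and s: "s \<noteq> 0"
  shows "\<exists>e>0. \<forall>q\<in>ball p0 e. H q = H p0"
proof -
  define X where "X = (1/s) *\<^sub>R \<phi>v p0"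
  define Y where "Y = (1/s) *\<^sub>R \<phi>u p0"
  define A where "A = (\<lambda>q. lor (\<phi>u q) X)"
  define B where "B = (\<lambda>q. lor (\<phi>v q) X)"
  define C where "C = (\<lambda>q. lor (\<phi>u q) Y)"
  define D where "D = (\<lambda>q. lor (\<phi>v q) Y)"
  define K where "K = (\<lambda>q. (lor (\<phi> q) X, lor (\<phi> q) Y))"
  have dK: "(K has_derivative (\<lambda>h. (fst h * A q + snd h * B q, fst h * C q + snd h * D q))) (at q)"
    if "q \<in> W" for q
    unfolding K_def A_def B_def C_def D_def
    by (rule has_derivative_Pair[OF lor_deriv_const[OF d\<phi>[OF that]] lor_deriv_const[OF d\<phi>[OF that]]])
  define E11 where "E11 = Blinfun (\<lambda>h::real\<times>real. (fst h, 0::real))"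
  define E12 where "E12 = Blinfun (\<lambda>h::real\<times>real. (snd h, 0::real))"
  define E21 where "E21 = Blinfun (\<lambda>h::real\<times>real. (0::real, fst h))"
  define E22 where "E22 = Blinfun (\<lambda>h::real\<times>real. (0::real, snd h))"
  have bl: "bounded_linear (\<lambda>h::real\<times>real. (fst h, 0::real))"
    "bounded_linear (\<lambda>h::real\<times>real. (snd h, 0::real))"
    "bounded_linear (\<lambda>h::real\<times>real. (0::real, fst h))"
    "bounded_linear (\<lambda>h::real\<times>real. (0::real, snd h))"
    by (auto intro!: bounded_linear_Pair bounded_linear_fst bounded_linear_snd bounded_linear_zero)
  define f' where "f' = (\<lambda>q. A q *\<^sub>R E11 + B q *\<^sub>R E12 + C q *\<^sub>R E21 + D q *\<^sub>R E22)"
  have f'_apply: "blinfun_apply (f' q) h = (fst h * A q + snd h * B q, fst h * C q + snd h * D q)" for q h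
    unfolding f'_def E11_def E12_def E21_def E22_def
    by (simp add: blinfun.add_left blinfun.scaleR_left bounded_linear_Blinfun_apply[OF bl(1)]
        bounded_linear_Blinfun_apply[OF bl(2)] bounded_linear_Blinfun_apply[OF bl(3)]
        bounded_linear_Blinfun_apply[OF bl(4)] algebra_simps)
  have derK: "(K has_derivative blinfun_apply (f' q)) (at q)" if "q \<in> W" for q
    unfolding f'_apply[abs_def] using dK[OF that] by simp
  have cA: "continuous_on W A" "continuous_on W B" "continuous_on W C" "continuous_on W D"
    unfolding A_def B_def C_def D_def
    by (auto intro!: continuous_on_lor c\<phi>u c\<phi>v continuous_on_const)
  have cf': "continuous_on W f'"
    unfolding f'_def by (intro continuous_intros cA)
  have A0: "A p0 = 1" "B p0 = 0" "C p0 = 0" "D p0 = 1"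
    unfolding A_def B_def C_def D_def X_def Y_def
    using n1 n2 n3 s by (simp_all add: lor_simps lor_sym[of "\<phi>v p0" "\<phi>u p0"])
  have f'0: "f' p0 = id_blinfun"
    by (rule blinfun_eqI) (simp add: f'_apply A0)
  have inv0: "id_blinfun o\<^sub>L f' p0 = id_blinfun" by (simp add: f'0) (rule blinfun_eqI, simp)
  obtain U' V L L' where U': "open U'" "U' \<subseteq> W" "p0 \<in> U'" and V: "open V" "K p0 \<in> V"
    and hom: "homeomorphism U' V K L"
    and dL: "\<And>y. y \<in> V \<Longrightarrow> (L has_derivative (L' y)) (at y)"
    and L': "\<And>y. y \<in> V \<Longrightarrow> L' y = inv (blinfun_apply (f' (L y)))"
    and bij: "\<And>y. y \<in> V \<Longrightarrow> bij (blinfun_apply (f' (L y)))"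
    using inverse_function_theorem[OF W(1) derK cf' W(2) inv0] by metis
  have LV: "L y \<in> W" if "y \<in> V" for y
    using hom that U' unfolding homeomorphism_def by auto
  define G where "G = (\<lambda>y. lor (N (L y)) X)"
  define M where "M = (\<lambda>y. lor (N (L y)) Y)"
  have fl: "blinfun_apply (f' (L y)) (L' y h) = h" if "y \<in> V" for y h
    using L'[OF that] bij[OF that] by (simp add: bij_is_surj surj_f_inv_f)
  have dG: "(G has_derivative (\<lambda>h. - H (L y) * fst h)) (at y)" if y: "y \<in> V" for y
  proof -
    note dg = lor_deriv_const[OF dN[OF LV[OF y]], of X]
    have "((\<lambda>x. lor (N (L x)) X) has_derivative
       (\<lambda>h. fst (L' y h) * lor (Nu (L y)) X + snd (L' y h) * lor (Nv (L y)) X)) (at y)"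
      using has_derivative_compose[OF dL[OF y] dg] by (simp add: o_def)
    moreover have "fst (L' y h) * lor (Nu (L y)) X + snd (L' y h) * lor (Nv (L y)) X = - H (L y) * fst h" for h
    proof -
      have "fst (L' y h) * lor (Nu (L y)) X + snd (L' y h) * lor (Nv (L y)) X
          = - H (L y) * fst (blinfun_apply (f' (L y)) (L' y h))"
        using Nu[OF LV[OF y]] Nv[OF LV[OF y]] by (simp add: f'_apply A_def B_def lor_simps algebra_simps)
      then show ?thesis using fl[OF y] by simp
    qed
    ultimately show ?thesis unfolding G_def by simp
  qed
  have dM: "(M has_derivative (\<lambda>h. - H (L y) * snd h)) (at y)" if y: "y \<in> V" for y
  proof -
    note dg = lor_deriv_const[OF dN[OF LV[OF y]], of Y]
    have "((\<lambda>x. lor (N (L x)) Y) has_derivative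
       (\<lambda>h. fst (L' y h) * lor (Nu (L y)) Y + snd (L' y h) * lor (Nv (L y)) Y)) (at y)"
      using has_derivative_compose[OF dL[OF y] dg] by (simp add: o_def)
    moreover have "fst (L' y h) * lor (Nu (L y)) Y + snd (L' y h) * lor (Nv (L y)) Y = - H (L y) * snd h" for h
    proof -
      have "fst (L' y h) * lor (Nu (L y)) Y + snd (L' y h) * lor (Nv (L y)) Y
          = - H (L y) * snd (blinfun_apply (f' (L y)) (L' y h))"
        using Nu[OF LV[OF y]] Nv[OF LV[OF y]] by (simp add: f'_apply C_def D_def lor_simps algebra_simps)
      then show ?thesis using fl[OF y] by simp
    qed
    ultimately show ?thesis unfolding M_def by simp
  qed
  obtain e where e: "e > 0" "\<And>y. y \<in> ball (K p0) e \<Longrightarrow> - H (L y) = - H (L (K p0))"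
    using local_const2[OF V dG dM] by blast
  have LK: "L (K q) = q" if "q \<in> U'" for q using homeomorphism_apply1[OF hom that] .
  have "continuous (at p0) K" using has_derivative_continuous[OF derK[OF W(2)]] .
  then obtain d1 where d1: "d1 > 0" "\<And>q. dist q p0 < d1 \<Longrightarrow> dist (K q) (K p0) < e"
    using e(1) unfolding continuous_at_eps_delta by blast
  obtain d2 where d2: "d2 > 0" "ball p0 d2 \<subseteq> U'" using U' open_contains_ball by blast
  show ?thesis
  proof (intro exI[of _ "min d1 d2"] conjI ballI)
    show "min d1 d2 > 0" using d1 d2 by simp
    fix q assume q: "q \<in> ball p0 (min d1 d2)"
    then have qU: "q \<in> U'" using d2 by (auto simp: dist_commute)
    have "K q \<in> ball (K p0) e" using d1(2)[of q] q by (simp add: dist_commute)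
    then have "H (L (K q)) = H (L (K p0))" using e(2) by simp
    then show "H q = H p0" using LK[OF qU] LK[OF U'(3)] by simp
  qed
qed

theorem proposition10p1:
  fixes U :: "(real \<times> real) set"
    and \<phi> \<phi>u \<phi>v \<phi>uu \<phi>uv \<phi>vu \<phi>vv N Nu Nv :: "real \<times> real \<Rightarrow> real^4"
    and \<omega> :: "real \<times> real \<Rightarrow> real"
  assumes U: "open U" "connected U"
    and d\<phi>: "\<And>p. p \<in> U \<Longrightarrow> (\<phi> has_derivative (\<lambda>h. fst h *\<^sub>R \<phi>u p + snd h *\<^sub>R \<phi>v p)) (at p)"
    and d\<phi>u: "\<And>p. p \<in> U \<Longrightarrow> (\<phi>u has_derivative (\<lambda>h. fst h *\<^sub>R \<phi>uu p + snd h *\<^sub>R \<phi>uv p)) (at p)"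
    and d\<phi>v: "\<And>p. p \<in> U \<Longrightarrow> (\<phi>v has_derivative (\<lambda>h. fst h *\<^sub>R \<phi>vu p + snd h *\<^sub>R \<phi>vv p)) (at p)"
    and C2: "continuous_on U \<phi>uu" "continuous_on U \<phi>uv" "continuous_on U \<phi>vu" "continuous_on U \<phi>vv"
    and dN: "\<And>p. p \<in> U \<Longrightarrow> (N has_derivative (\<lambda>h. fst h *\<^sub>R Nu p + snd h *\<^sub>R Nv p)) (at p)"
    and in_H: "\<And>p. p \<in> U \<Longrightarrow> \<phi> p \<in> H31"
    and null_u: "\<And>p. p \<in> U \<Longrightarrow> lor (\<phi>u p) (\<phi>u p) = 0"
    and null_v: "\<And>p. p \<in> U \<Longrightarrow> lor (\<phi>v p) (\<phi>v p) = 0"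
    and conf: "\<And>p. p \<in> U \<Longrightarrow> lor (\<phi>u p) (\<phi>v p) = exp (\<omega> p) / 2"
    and N_unit: "\<And>p. p \<in> U \<Longrightarrow> lor (N p) (N p) = 1"
    and N_perp: "\<And>p. p \<in> U \<Longrightarrow> lor (N p) (\<phi> p) = 0 \<and> lor (N p) (\<phi>u p) = 0 \<and> lor (N p) (\<phi>v p) = 0"
  defines "H \<equiv> (\<lambda>p. 2 * exp (- \<omega> p) * lor (\<phi>uv p) (N p))"
    and "Q \<equiv> (\<lambda>p. lor (\<phi>uu p) (N p))"
    and "R \<equiv> (\<lambda>p. lor (\<phi>vv p) (N p))"
  shows "(conformal_rel U (\<lambda>p. \<phi>u p + Nu p) (\<lambda>p. \<phi>v p + Nv p) \<phi>u \<phi>v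
            \<longleftrightarrow> (\<forall>p\<in>U. H p = 1) \<or> (\<forall>p\<in>U. Q p = 0 \<and> R p = 0))
       \<and> (conformal_rel U (\<lambda>p. \<phi>u p - Nu p) (\<lambda>p. \<phi>v p - Nv p) \<phi>u \<phi>v
            \<longleftrightarrow> (\<forall>p\<in>U. H p = -1) \<or> (\<forall>p\<in>U. Q p = 0 \<and> R p = 0))"
proof -
  have cU: "continuous_on U \<phi>u" "continuous_on U \<phi>v" "continuous_on U N"
    by (auto intro!: continuous_at_imp_continuous_on has_derivative_continuous[OF d\<phi>u]
        has_derivative_continuous[OF d\<phi>v] has_derivative_continuous[OF dN])
  have sym: "\<phi>vu p = \<phi>uv p" if p: "p \<in> U" for p
  proof -
    have "\<phi>uv p $ i = \<phi>vu p $ i" for i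
      by (rule schwarz[OF U(1) p, of "\<lambda>q. \<phi> q $ i" "\<lambda>q. \<phi>u q $ i" "\<lambda>q. \<phi>v q $ i"
            "\<lambda>q. \<phi>uu q $ i" "\<lambda>q. \<phi>uv q $ i" "\<lambda>q. \<phi>vu q $ i" "\<lambda>q. \<phi>vv q $ i"])
         (auto intro!: comp_deriv d\<phi> d\<phi>u d\<phi>v bounded_linear.continuous_on[OF bounded_linear_vec_nth] C2)
    then show ?thesis by (simp add: vec_eq_iff)
  qed
  have HU: "\<And>q. q \<in> U \<Longrightarrow> lor (\<phi> q) (\<phi> q) = -1" using in_H by (simp add: H31_def)
  have NN: "\<And>q. q \<in> U \<Longrightarrow> lor (N q) (N q) = 1" using N_unit .
  have N\<phi>: "\<And>q. q \<in> U \<Longrightarrow> lor (N q) (\<phi> q) = 0" using N_perp by blast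
  have N\<phi>u: "\<And>q. q \<in> U \<Longrightarrow> lor (N q) (\<phi>u q) = 0" using N_perp by blast
  have N\<phi>v: "\<And>q. q \<in> U \<Longrightarrow> lor (N q) (\<phi>v q) = 0" using N_perp by blast
  have frame: "lor (\<phi> p) (\<phi>u p) = 0 \<and> lor (\<phi> p) (\<phi>v p) = 0 \<and> lor (Nu p) (N p) = 0 \<and> lor (Nv p) (N p) = 0
     \<and> lor (Nu p) (\<phi> p) = 0 \<and> lor (Nv p) (\<phi> p) = 0
     \<and> lor (Nu p) (\<phi>u p) = - Q p \<and> lor (Nv p) (\<phi>u p) = - lor (\<phi>uv p) (N p)
     \<and> lor (Nu p) (\<phi>v p) = - lor (\<phi>uv p) (N p) \<and> lor (Nv p) (\<phi>v p) = - R p"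
    if p: "p \<in> U" for p
  proof -
    have a: "lor (\<phi>u p) (\<phi> p) + lor (\<phi> p) (\<phi>u p) = 0 \<and> lor (\<phi>v p) (\<phi> p) + lor (\<phi> p) (\<phi>v p) = 0"
      by (rule lor_const[OF U(1) p HU d\<phi>[OF p] d\<phi>[OF p]])
    have b: "lor (Nu p) (N p) + lor (N p) (Nu p) = 0 \<and> lor (Nv p) (N p) + lor (N p) (Nv p) = 0"
      by (rule lor_const[OF U(1) p NN dN[OF p] dN[OF p]])
    have c: "lor (Nu p) (\<phi> p) + lor (N p) (\<phi>u p) = 0 \<and> lor (Nv p) (\<phi> p) + lor (N p) (\<phi>v p) = 0"
      by (rule lor_const[OF U(1) p N\<phi> dN[OF p] d\<phi>[OF p]])
    have d: "lor (Nu p) (\<phi>u p) + lor (N p) (\<phi>uu p) = 0 \<and> lor (Nv p) (\<phi>u p) + lor (N p) (\<phi>uv p) = 0"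
      by (rule lor_const[OF U(1) p N\<phi>u dN[OF p] d\<phi>u[OF p]])
    have e: "lor (Nu p) (\<phi>v p) + lor (N p) (\<phi>vu p) = 0 \<and> lor (Nv p) (\<phi>v p) + lor (N p) (\<phi>vv p) = 0"
      by (rule lor_const[OF U(1) p N\<phi>v dN[OF p] d\<phi>v[OF p]])
    show ?thesis
      using a b c d e sym[OF p] N\<phi>u[OF p] N\<phi>v[OF p]
      by (simp add: Q_def R_def lor_sym[of "\<phi>u p" "\<phi> p"] lor_sym[of "\<phi>v p" "\<phi> p"]
          lor_sym[of "N p" "Nu p"] lor_sym[of "N p" "Nv p"] lor_sym[of "N p" "\<phi>uu p"]
          lor_sym[of "N p" "\<phi>uv p"] lor_sym[of "N p" "\<phi>vv p"])
  qed
  have Hrel: "lor (\<phi>uv p) (N p) = H p * exp (\<omega> p) / 2" for p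
    by (simp add: H_def exp_minus field_simps)
  have decomp: "Nu p = (- H p) *\<^sub>R \<phi>u p + (- 2 * Q p / exp (\<omega> p)) *\<^sub>R \<phi>v p
      \<and> Nv p = (- 2 * R p / exp (\<omega> p)) *\<^sub>R \<phi>u p + (- H p) *\<^sub>R \<phi>v p"
    if p: "p \<in> U" for p
  proof -
    have fr: "lor (\<phi> p) (\<phi> p) = -1" "lor (\<phi> p) (\<phi>u p) = 0" "lor (\<phi> p) (\<phi>v p) = 0"
      "lor (\<phi> p) (N p) = 0" "lor (\<phi>u p) (\<phi>u p) = 0" "lor (\<phi>v p) (\<phi>v p) = 0"
      "lor (\<phi>u p) (\<phi>v p) = exp (\<omega> p) / 2" "exp (\<omega> p) / 2 \<noteq> 0"
      "lor (\<phi>u p) (N p) = 0" "lor (\<phi>v p) (N p) = 0" "lor (N p) (N p) = 1"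
      using HU[OF p] frame[OF p] N\<phi>[OF p] N\<phi>u[OF p] N\<phi>v[OF p] null_u[OF p] null_v[OF p] conf[OF p] NN[OF p]
      by (simp_all add: lor_sym[of "\<phi> p" "N p"] lor_sym[of "\<phi>u p" "N p"] lor_sym[of "\<phi>v p" "N p"])
    note D = frame_decomp[OF fr]
    have "Nu p = (- lor (Nu p) (\<phi> p)) *\<^sub>R \<phi> p + (lor (Nu p) (\<phi>v p) / (exp (\<omega> p) / 2)) *\<^sub>R \<phi>u p
       + (lor (Nu p) (\<phi>u p) / (exp (\<omega> p) / 2)) *\<^sub>R \<phi>v p + lor (Nu p) (N p) *\<^sub>R N p" by (rule D)
    also have "\<dots> = (- H p) *\<^sub>R \<phi>u p + (- 2 * Q p / exp (\<omega> p)) *\<^sub>R \<phi>v p"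
      using frame[OF p] by (simp add: Hrel)
    finally have 1: "Nu p = (- H p) *\<^sub>R \<phi>u p + (- 2 * Q p / exp (\<omega> p)) *\<^sub>R \<phi>v p" .
    have "Nv p = (- lor (Nv p) (\<phi> p)) *\<^sub>R \<phi> p + (lor (Nv p) (\<phi>v p) / (exp (\<omega> p) / 2)) *\<^sub>R \<phi>u p
       + (lor (Nv p) (\<phi>u p) / (exp (\<omega> p) / 2)) *\<^sub>R \<phi>v p + lor (Nv p) (N p) *\<^sub>R N p" by (rule D)
    also have "\<dots> = (- 2 * R p / exp (\<omega> p)) *\<^sub>R \<phi>u p + (- H p) *\<^sub>R \<phi>v p"
      using frame[OF p] by (simp add: Hrel)
    finally have 2: "Nv p = (- 2 * R p / exp (\<omega> p)) *\<^sub>R \<phi>u p + (- H p) *\<^sub>R \<phi>v p" .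
    show ?thesis using 1 2 by simp
  qed
  have quad: "lor (\<alpha> *\<^sub>R \<phi>u p + \<beta> *\<^sub>R \<phi>v p) (\<alpha> *\<^sub>R \<phi>u p + \<beta> *\<^sub>R \<phi>v p) = \<alpha> * \<beta> * exp (\<omega> p)"
    if p: "p \<in> U" for p \<alpha> \<beta>
    using null_u[OF p] null_v[OF p] conf[OF p]
    by (simp add: lor_simps lor_sym[of "\<phi>v p" "\<phi>u p"] algebra_simps)
  have eplus: "lor (\<phi>u p + Nu p) (\<phi>u p + Nu p) = 0 \<longleftrightarrow> (H p - 1) * Q p = 0"
     "lor (\<phi>v p + Nv p) (\<phi>v p + Nv p) = 0 \<longleftrightarrow> (H p - 1) * R p = 0"
     "lor (\<phi>u p - Nu p) (\<phi>u p - Nu p) = 0 \<longleftrightarrow> (H p - -1) * Q p = 0"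
     "lor (\<phi>v p - Nv p) (\<phi>v p - Nv p) = 0 \<longleftrightarrow> (H p - -1) * R p = 0"
    if p: "p \<in> U" for p
  proof -
    have ep: "exp (\<omega> p) > 0" by simp
    have du: "Nu p = (- H p) *\<^sub>R \<phi>u p + (- 2 * Q p / exp (\<omega> p)) *\<^sub>R \<phi>v p"
      and dv: "Nv p = (- 2 * R p / exp (\<omega> p)) *\<^sub>R \<phi>u p + (- H p) *\<^sub>R \<phi>v p"
      using decomp[OF p] by auto
    have "\<phi>u p + Nu p = (1 - H p) *\<^sub>R \<phi>u p + (- 2 * Q p / exp (\<omega> p)) *\<^sub>R \<phi>v p"
      unfolding du dv by (simp add: algebra_simps)
    note eqn = this
    show "lor (\<phi>u p + Nu p) (\<phi>u p + Nu p) = 0 \<longleftrightarrow> (H p - 1) * Q p = 0"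
      unfolding eqn quad[OF p] using ep by (auto simp: field_simps)
    have "\<phi>v p + Nv p = (- 2 * R p / exp (\<omega> p)) *\<^sub>R \<phi>u p + (1 - H p) *\<^sub>R \<phi>v p"
      unfolding du dv by (simp add: algebra_simps)
    note eqn = this
    show "lor (\<phi>v p + Nv p) (\<phi>v p + Nv p) = 0 \<longleftrightarrow> (H p - 1) * R p = 0"
      unfolding eqn quad[OF p] using ep by (auto simp: field_simps)
    have "\<phi>u p - Nu p = (1 + H p) *\<^sub>R \<phi>u p + (2 * Q p / exp (\<omega> p)) *\<^sub>R \<phi>v p"
      unfolding du dv by (simp add: algebra_simps)
    note eqn = this
    have "(1 + H p) * (2 * Q p / exp (\<omega> p)) * exp (\<omega> p) = 2 * ((H p - -1) * Q p)"
      using ep by (simp add: field_simps)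
    then show "lor (\<phi>u p - Nu p) (\<phi>u p - Nu p) = 0 \<longleftrightarrow> (H p - -1) * Q p = 0"
      unfolding eqn quad[OF p] by (auto simp: add.commute)
    have "\<phi>v p - Nv p = (2 * R p / exp (\<omega> p)) *\<^sub>R \<phi>u p + (1 + H p) *\<^sub>R \<phi>v p"
      unfolding du dv by (simp add: algebra_simps)
    note eqn = this
    have "(2 * R p / exp (\<omega> p)) * (1 + H p) * exp (\<omega> p) = 2 * ((H p - -1) * R p)"
      using ep by (simp add: field_simps)
    then show "lor (\<phi>v p - Nv p) (\<phi>v p - Nv p) = 0 \<longleftrightarrow> (H p - -1) * R p = 0"
      unfolding eqn quad[OF p] by (auto simp: add.commute)
  qed
  have ci: "conformal_rel U Yu Yv \<phi>u \<phi>v \<longleftrightarrow> (\<forall>p\<in>U. lor (Yu p) (Yu p) = 0 \<and> lor (Yv p) (Yv p) = 0)"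
    for Yu Yv
    by (rule conformal_iff) (simp_all add: null_u null_v conf)
  have eq1: "conformal_rel U (\<lambda>p. \<phi>u p + Nu p) (\<lambda>p. \<phi>v p + Nv p) \<phi>u \<phi>v
      \<longleftrightarrow> (\<forall>p\<in>U. (H p - 1) * Q p = 0 \<and> (H p - 1) * R p = 0)"
    unfolding ci using eplus by simp
  have eq2: "conformal_rel U (\<lambda>p. \<phi>u p - Nu p) (\<lambda>p. \<phi>v p - Nv p) \<phi>u \<phi>v
      \<longleftrightarrow> (\<forall>p\<in>U. (H p - -1) * Q p = 0 \<and> (H p - -1) * R p = 0)"
    unfolding ci using eplus by simp
  have contH: "continuous_on U H"
  proof -
    have nz: "\<forall>p\<in>U. lor (\<phi>u p) (\<phi>v p) \<noteq> 0"
    proof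
      fix p assume p: "p \<in> U"
      have "exp (\<omega> p) / 2 \<noteq> 0" by simp
      then show "lor (\<phi>u p) (\<phi>v p) \<noteq> 0" using conf[OF p] by metis
    qed
    have "continuous_on U (\<lambda>p. lor (\<phi>uv p) (N p) / lor (\<phi>u p) (\<phi>v p))"
      using nz by (intro continuous_intros continuous_on_lor C2 cU) auto
    moreover have "lor (\<phi>uv p) (N p) / lor (\<phi>u p) (\<phi>v p) = H p" if "p \<in> U" for p
      unfolding Hrel conf[OF that] by simp
    ultimately show ?thesis using continuous_on_cong by (metis (no_types, lifting))
  qed
  have LC: "\<exists>e>0. \<forall>q\<in>ball p0 e. H q = H p0"
    if p0: "p0 \<in> U" and r: "r > 0" "ball p0 r \<subseteq> U" and z: "\<forall>q\<in>ball p0 r. Q q = 0 \<and> R q = 0" for p0 r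
  proof (rule umbilic_local_const[of "ball p0 r" p0 \<phi> \<phi>u \<phi>v N Nu Nv H "exp (\<omega> p0) / 2"])
    show "open (ball p0 r)" "p0 \<in> ball p0 r" using r by auto
    show "(\<phi> has_derivative (\<lambda>h. fst h *\<^sub>R \<phi>u p + snd h *\<^sub>R \<phi>v p)) (at p)" if "p \<in> ball p0 r" for p
      using d\<phi> that r by blast
    show "continuous_on (ball p0 r) \<phi>u" "continuous_on (ball p0 r) \<phi>v"
      using cU r continuous_on_subset by blast+
    show "(N has_derivative (\<lambda>h. fst h *\<^sub>R Nu p + snd h *\<^sub>R Nv p)) (at p)" if "p \<in> ball p0 r" for p
      using dN that r by blast
    show "Nu p = (- H p) *\<^sub>R \<phi>u p" "Nv p = (- H p) *\<^sub>R \<phi>v p" if "p \<in> ball p0 r" for p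
      using decomp[of p] z that r by auto
    show "lor (\<phi>u p0) (\<phi>u p0) = 0" "lor (\<phi>v p0) (\<phi>v p0) = 0" "lor (\<phi>u p0) (\<phi>v p0) = exp (\<omega> p0) / 2"
      using null_u null_v conf p0 by auto
    show "exp (\<omega> p0) / 2 \<noteq> 0" by simp
  qed
  have glob: "(\<forall>p\<in>U. (H p - c) * Q p = 0 \<and> (H p - c) * R p = 0)
       \<longleftrightarrow> (\<forall>p\<in>U. H p = c) \<or> (\<forall>p\<in>U. Q p = 0 \<and> R p = 0)" for c
  proof
    assume pw: "\<forall>p\<in>U. (H p - c) * Q p = 0 \<and> (H p - c) * R p = 0"
    show "(\<forall>p\<in>U. H p = c) \<or> (\<forall>p\<in>U. Q p = 0 \<and> R p = 0)"
    proof (cases "\<forall>p\<in>U. H p = c")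
      case True then show ?thesis by blast
    next
      case False
      then obtain p1 where p1: "p1 \<in> U" "H p1 \<noteq> c" by blast
      define d where "d = H p1"
      define S where "S = {p\<in>U. H p = d}"
      define T where "T = U \<inter> H -` (- {d})"
      have oT: "open T" unfolding T_def by (rule continuous_open_preimage[OF contH U(1)]) (simp add: open_Compl)
      have oS: "open S" unfolding open_contains_ball
      proof
        fix p assume pS: "p \<in> S"
        then have pU: "p \<in> U" and Hp: "H p = d" by (auto simp: S_def)
        have dc: "d \<noteq> c" using p1 by (simp add: d_def)
        obtain r0 where r0: "r0 > 0" "ball p r0 \<subseteq> U" using U(1) pU open_contains_ball by blast
        have "continuous (at p) H" using contH U(1) pU continuous_on_eq_continuous_at by blast
        obtain r1 where r1: "r1 > 0" "\<And>q. dist q p < r1 \<Longrightarrow> dist (H q) (H p) < \<bar>d - c\<bar>"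
        proof -
          have "\<bar>d - c\<bar> > 0" using dc by simp
          from \<open>continuous (at p) H\<close>[unfolded continuous_at_eps_delta, rule_format, OF this]
          obtain r1 where "r1 > 0" "\<forall>q. dist q p < r1 \<longrightarrow> dist (H q) (H p) < \<bar>d - c\<bar>" by blast
          then show ?thesis using that by blast
        qed
        define r where "r = min r0 r1"
        have r: "r > 0" "ball p r \<subseteq> U" using r0 r1 by (auto simp: r_def)
        have z: "\<forall>q\<in>ball p r. Q q = 0 \<and> R q = 0"
        proof
          fix q assume q: "q \<in> ball p r"
          then have "dist q p < r1" by (simp add: r_def dist_commute)
          then have "\<bar>H q - d\<bar> < \<bar>d - c\<bar>" using r1(2) Hp by (simp add: dist_real_def)
          have "H q - c \<noteq> 0"
          proof
            assume "H q - c = 0"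
            then have "H q = c" by simp
            with \<open>\<bar>H q - d\<bar> < \<bar>d - c\<bar>\<close> show False by (simp add: abs_minus_commute)
          qed
          moreover have "q \<in> U" using q r by auto
          then have "(H q - c) * Q q = 0 \<and> (H q - c) * R q = 0" using pw by blast
          ultimately show "Q q = 0 \<and> R q = 0" by simp
        qed
        obtain e where e: "e > 0" "\<forall>q\<in>ball p e. H q = H p" using LC[OF pU r z] by blast
        show "\<exists>e>0. ball p e \<subseteq> S"
        proof (intro exI[of _ "min e r"] conjI)
          show "min e r > 0" using e r by simp
          show "ball p (min e r) \<subseteq> S"
          proof
            fix q assume q: "q \<in> ball p (min e r)"
            then have "q \<in> ball p e" "q \<in> ball p r" by auto
            then have "H q = d" "q \<in> U" using e(2) Hp r(2) by auto
            then show "q \<in> S" unfolding S_def by blast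
          qed
        qed
      qed
      have "S \<inter> T \<inter> U = {}" "U \<subseteq> S \<union> T" by (auto simp: S_def T_def)
      from connectedD[OF U(2) oS oT this] have "S \<inter> U = {} \<or> T \<inter> U = {}" .
      moreover have "p1 \<in> S \<inter> U" using p1 by (simp add: S_def d_def)
      ultimately have "T \<inter> U = {}" by blast
      then have "\<forall>p\<in>U. H p = d" by (auto simp: T_def)
      moreover have "d \<noteq> c" using p1 by (simp add: d_def)
      ultimately have "\<forall>p\<in>U. H p \<noteq> c" by simp
      have "\<forall>p\<in>U. Q p = 0 \<and> R p = 0"
      proof
        fix p assume p: "p \<in> U"
        then have "H p - c \<noteq> 0" using \<open>\<forall>p\<in>U. H p \<noteq> c\<close> by simp
        moreover have "(H p - c) * Q p = 0 \<and> (H p - c) * R p = 0" using pw p by blast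
        ultimately show "Q p = 0 \<and> R p = 0" by simp
      qed
      then show ?thesis by blast
    qed
  next
    assume "(\<forall>p\<in>U. H p = c) \<or> (\<forall>p\<in>U. Q p = 0 \<and> R p = 0)"
    then show "\<forall>p\<in>U. (H p - c) * Q p = 0 \<and> (H p - c) * R p = 0" by auto
  qed
  show ?thesis unfolding eq1 eq2 glob by simp
qed

end
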